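(* Let $E$ be a graph satisfying Condition (K), and let $v\in E^0$ support at least two distinct return paths. Then the map $\mathbb{AP}(E)\to\mathbb{AP}(E_C^v)$ given by $(H,B)\mapsto(H,B)$ if $v\notin H$ and $(H,B)\mapsto(H\cup\{u_1,u_2\},B)$ if $v\in H$ is a well-defined order isomorphism.
   Context: A graph $E=(E^0,E^1,r,s)$ consists of countable sets $E^0$ (vertices) and $E^1$ (edges) and maps $r,s\colon E^1\to E^0$. A path is a finite sequence $\mu=e_1\cdots e_n$ ($n\ge1$) of edges with $r(e_i)=s(e_{i+1})$; $s(\mu)=s(e_1)$, $r(\mu)=r(e_n)$. Write $w\ge w'$ if there is a path from $w$ to $w'$. A return path is a path $\mu=e_1\cdots e_n$ with $s(\mu)=r(\mu)$ and $r(e_i)\neq r(\mu)$ for $i<n$; a vertex $w$ supports $\mu$ if $s(\mu)=w$. $E$ satisfies Condition (K) if no vertex supports precisely one return path. A vertex is regular if it emits a finite nonzero number of edges, and an infinite emitter if it emits infinitely many. A subset $K\subseteq E^0$ is hereditary if $w\in K$ and $w\ge w'$ imply $w'\in K$, and saturated if every regular vertex $w$ all of whose emitted edges have range in $K$ lies in $K$. For hereditary saturated $H$, $H_\infty^{\mathrm{fin}}$ is the set of infinite emitters in $E^0\setminus H$ emitting a finite nonzero number of edges with range in $E^0\setminus H$. An admissible pair is $(H,B)$ with $H$ hereditary and saturated and $B\subseteq H_\infty^{\mathrm{fin}}$; $\mathbb{AP}(E)$ denotes the set of admissible pairs, partially ordered by $(H,B)\le(H',B')$ iff $H\subseteq H'$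 and $B\subseteq H'\cup B'$. The Cuntz Splice $E_C^v$ of $E$ at $v$ is the graph with vertex set $E^0\sqcup\{u_1,u_2\}$ and edge set $E^1\sqcup\{f_1,f_2,h_1,h_2,k_1,k_2\}$, old edges keeping range and source, with $f_1\colon v\to u_1$, $f_2\colon u_1\to v$, $h_1\colon u_1\to u_1$, $h_2\colon u_1\to u_2$, $k_1\colon u_2\to u_1$, $k_2\colon u_2\to u_2$ ($e\colon a\to b$ means $s(e)=a$, $r(e)=b$). *)

theory Defs
  imports Main "HOL-Library.Countable_Set"
begin

record ('v, 'e) graph =
  verts :: "'v set"
  edges :: "'e set"
  rng   :: "'e \<Rightarrow> 'v"
  src   :: "'e \<Rightarrow> 'v"

definition wf_graph :: "('v, 'e) graph \<Rightarrow> bool" where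
  "wf_graph E \<longleftrightarrow> countable (verts E) \<and> countable (edges E) \<and>
     (\<forall>e \<in> edges E. src E e \<in> verts E \<and> rng E e \<in> verts E)"

definition is_path :: "('v, 'e) graph \<Rightarrow> 'e list \<Rightarrow> bool" where
  "is_path E \<mu> \<longleftrightarrow> \<mu> \<noteq> [] \<and> set \<mu> \<subseteq> edges E \<and>
     (\<forall>i. Suc i < length \<mu> \<longrightarrow> rng E (\<mu> ! i) = src E (\<mu> ! Suc i))"

definition path_src :: "('v, 'e) graph \<Rightarrow> 'e list \<Rightarrow> 'v" where
  "path_src E \<mu> = src E (hd \<mu>)"

definition path_rng :: "('v, 'e) graph \<Rightarrow> 'e list \<Rightarrow> 'v" where
  "path_rng E \<mu> = rng E (last \<mu>)"

definition reaches :: "('v, 'e) graph \<Rightarrow> 'v \<Rightarrow> 'v \<Rightarrow> bool" where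
  "reaches E w w' \<longleftrightarrow> (\<exists>\<mu>. is_path E \<mu> \<and> path_src E \<mu> = w \<and> path_rng E \<mu> = w')"

definition return_path :: "('v, 'e) graph \<Rightarrow> 'e list \<Rightarrow> bool" where
  "return_path E \<mu> \<longleftrightarrow> is_path E \<mu> \<and> path_src E \<mu> = path_rng E \<mu> \<and>
     (\<forall>i. Suc i < length \<mu> \<longrightarrow> rng E (\<mu> ! i) \<noteq> path_rng E \<mu>)"

definition supports :: "('v, 'e) graph \<Rightarrow> 'v \<Rightarrow> 'e list \<Rightarrow> bool" where
  "supports E w \<mu> \<longleftrightarrow> path_src E \<mu> = w"

definition condition_K :: "('v, 'e) graph \<Rightarrow> bool" where
  "condition_K E \<longleftrightarrow> (\<forall>w \<in> verts E. \<not> (\<exists>!\<mu>. return_path E \<mu> \<and> supports E w \<mu>))"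

definition emitted :: "('v, 'e) graph \<Rightarrow> 'v \<Rightarrow> 'e set" where
  "emitted E w = {e \<in> edges E. src E e = w}"

definition regular :: "('v, 'e) graph \<Rightarrow> 'v \<Rightarrow> bool" where
  "regular E w \<longleftrightarrow> finite (emitted E w) \<and> emitted E w \<noteq> {}"

definition infinite_emitter :: "('v, 'e) graph \<Rightarrow> 'v \<Rightarrow> bool" where
  "infinite_emitter E w \<longleftrightarrow> infinite (emitted E w)"

definition hereditary :: "('v, 'e) graph \<Rightarrow> 'v set \<Rightarrow> bool" where
  "hereditary E K \<longleftrightarrow> K \<subseteq> verts E \<and> (\<forall>w \<in> K. \<forall>w'. reaches E w w' \<longrightarrow> w' \<in> K)"

definition saturated :: "('v, 'e) graph \<Rightarrow> 'v set \<Rightarrow> bool" where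
  "saturated E K \<longleftrightarrow> K \<subseteq> verts E \<and>
     (\<forall>w \<in> verts E. regular E w \<and> (\<forall>e \<in> emitted E w. rng E e \<in> K) \<longrightarrow> w \<in> K)"

definition H_inf_fin :: "('v, 'e) graph \<Rightarrow> 'v set \<Rightarrow> 'v set" where
  "H_inf_fin E H = {w \<in> verts E - H. infinite_emitter E w \<and>
      finite {e \<in> emitted E w. rng E e \<notin> H} \<and> {e \<in> emitted E w. rng E e \<notin> H} \<noteq> {}}"

definition admissible_pairs :: "('v, 'e) graph \<Rightarrow> ('v set \<times> 'v set) set" where
  "admissible_pairs E = {(H, B). hereditary E H \<and> saturated E H \<and> B \<subseteq> H_inf_fin E H}"

definition ap_le :: "('v set \<times> 'v set) \<Rightarrow> ('v set \<times> 'v set) \<Rightarrow> bool" where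
  "ap_le p q \<longleftrightarrow> fst p \<subseteq> fst q \<and> snd p \<subseteq> fst q \<union> snd q"

datatype new_vert = U1 | U2
datatype new_edge = F1 | F2 | H1 | H2 | K1 | K2

definition cuntz_splice :: "('v, 'e) graph \<Rightarrow> 'v \<Rightarrow> ('v + new_vert, 'e + new_edge) graph" where
  "cuntz_splice E v = \<lparr>
     verts = Inl ` verts E \<union> {Inr U1, Inr U2},
     edges = Inl ` edges E \<union> range Inr,
     rng = (\<lambda>x. case x of Inl e \<Rightarrow> Inl (rng E e)
                | Inr F1 \<Rightarrow> Inr U1 | Inr F2 \<Rightarrow> Inl v
                | Inr H1 \<Rightarrow> Inr U1 | Inr H2 \<Rightarrow> Inr U2
                | Inr K1 \<Rightarrow> Inr U1 | Inr K2 \<Rightarrow> Inr U2),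
     src = (\<lambda>x. case x of Inl e \<Rightarrow> Inl (src E e)
                | Inr F1 \<Rightarrow> Inl v | Inr F2 \<Rightarrow> Inr U1
                | Inr H1 \<Rightarrow> Inr U1 | Inr H2 \<Rightarrow> Inr U1
                | Inr K1 \<Rightarrow> Inr U2 | Inr K2 \<Rightarrow> Inr U2) \<rparr>"

definition splice_ap_map :: "'v \<Rightarrow> ('v set \<times> 'v set) \<Rightarrow> (('v + new_vert) set \<times> ('v + new_vert) set)" where
  "splice_ap_map v p = (if v \<in> fst p then (Inl ` fst p \<union> {Inr U1, Inr U2}, Inl ` snd p)
                        else (Inl ` fst p, Inl ` snd p))"

end

theory Submission
  imports Defs
begin

lemma cs_verts[simp]: "verts (cuntz_splice E v) = Inl ` verts E \<union> {Inr U1, Inr U2}"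
  by (simp add: cuntz_splice_def)
lemma cs_edges[simp]: "edges (cuntz_splice E v) = Inl ` edges E \<union> range Inr"
  by (simp add: cuntz_splice_def)
lemma cs_rng[simp]:
  "rng (cuntz_splice E v) (Inl e) = Inl (rng E e)"
  "rng (cuntz_splice E v) (Inr F1) = Inr U1"
  "rng (cuntz_splice E v) (Inr F2) = Inl v"
  "rng (cuntz_splice E v) (Inr H1) = Inr U1"
  "rng (cuntz_splice E v) (Inr H2) = Inr U2"
  "rng (cuntz_splice E v) (Inr K1) = Inr U1"
  "rng (cuntz_splice E v) (Inr K2) = Inr U2"
  by (simp_all add: cuntz_splice_def)
lemma cs_src[simp]:
  "src (cuntz_splice E v) (Inl e) = Inl (src E e)"
  "src (cuntz_splice E v) (Inr F1) = Inl v"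
  "src (cuntz_splice E v) (Inr F2) = Inr U1"
  "src (cuntz_splice E v) (Inr H1) = Inr U1"
  "src (cuntz_splice E v) (Inr H2) = Inr U1"
  "src (cuntz_splice E v) (Inr K1) = Inr U2"
  "src (cuntz_splice E v) (Inr K2) = Inr U2"
  by (simp_all add: cuntz_splice_def)

lemma all_new_edge: "(\<forall>x::new_edge. P x) \<longleftrightarrow> P F1 \<and> P F2 \<and> P H1 \<and> P H2 \<and> P K1 \<and> P K2"
  by (metis new_edge.exhaust)

lemma emitted_C: "emitted (cuntz_splice E v) w =
   Inl ` {e \<in> edges E. Inl (src E e) = w} \<union> Inr ` {y. src (cuntz_splice E v) (Inr y) = w}"
proof (rule set_eqI)
  fix e show "e \<in> emitted (cuntz_splice E v) w \<longleftrightarrow>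
    e \<in> Inl ` {e \<in> edges E. Inl (src E e) = w} \<union> Inr ` {y. src (cuntz_splice E v) (Inr y) = w}"
    by (cases e) (auto simp: emitted_def)
qed

lemma newsrc_Inl: "{y. src (cuntz_splice E v) (Inr y) = Inl x} = (if x = v then {F1} else {})"
proof (rule set_eqI)
  fix y show "y \<in> {y. src (cuntz_splice E v) (Inr y) = Inl x} \<longleftrightarrow> y \<in> (if x = v then {F1} else {})"
    by (cases y) auto
qed

lemma newsrc_U1: "{y. src (cuntz_splice E v) (Inr y) = Inr U1} = {F2, H1, H2}"
proof (rule set_eqI)
  fix y show "y \<in> {y. src (cuntz_splice E v) (Inr y) = Inr U1} \<longleftrightarrow> y \<in> {F2, H1, H2}"
    by (cases y) auto
qed

lemma newsrc_U2: "{y. src (cuntz_splice E v) (Inr y) = Inr U2} = {K1, K2}"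
proof (rule set_eqI)
  fix y show "y \<in> {y. src (cuntz_splice E v) (Inr y) = Inr U2} \<longleftrightarrow> y \<in> {K1, K2}"
    by (cases y) auto
qed

lemma emitted_Inl:
  "emitted (cuntz_splice E v) (Inl x) = Inl ` emitted E x \<union> (if x = v then {Inr F1} else {})"
  unfolding emitted_C newsrc_Inl by (auto simp: emitted_def)

lemma emitted_U1: "emitted (cuntz_splice E v) (Inr U1) = {Inr F2, Inr H1, Inr H2}"
  unfolding emitted_C newsrc_U1 by auto

lemma emitted_U2: "emitted (cuntz_splice E v) (Inr U2) = {Inr K1, Inr K2}"
  unfolding emitted_C newsrc_U2 by auto


lemma path_closed:
  assumes "is_path G \<mu>" "src G (hd \<mu>) \<in> K" "\<forall>e\<in>edges G. src G e \<in> K \<longrightarrow> rng G e \<in> K"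
  shows "\<forall>i<length \<mu>. rng G (\<mu> ! i) \<in> K"
proof (intro allI impI)
  fix i assume "i < length \<mu>"
  then show "rng G (\<mu> ! i) \<in> K"
  proof (induction i)
    case 0
    have ne: "\<mu> \<noteq> []" using assms(1) by (simp add: is_path_def)
    have m0: "\<mu> ! 0 \<in> set \<mu>" using 0 by (rule nth_mem)
    have e0: "\<mu> ! 0 \<in> edges G" using assms(1) m0 unfolding is_path_def by blast
    have "hd \<mu> = \<mu> ! 0" using ne by (rule hd_conv_nth)
    then have "src G (\<mu> ! 0) \<in> K" using assms(2) by simp
    then show ?case using e0 assms(3) by blast
  next
    case (Suc i)
    then have "rng G (\<mu> ! i) \<in> K" by simp
    moreover have "rng G (\<mu> ! i) = src G (\<mu> ! Suc i)" using assms(1) Suc.prems by (auto simp: is_path_def)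
    moreover have "\<mu> ! Suc i \<in> edges G" using assms(1) Suc.prems by (auto simp: is_path_def)
    ultimately show ?case using assms(3) by auto
  qed
qed

lemma hered_iff:
  "hereditary G K \<longleftrightarrow> K \<subseteq> verts G \<and> (\<forall>e\<in>edges G. src G e \<in> K \<longrightarrow> rng G e \<in> K)"
proof
  assume h: "hereditary G K"
  have "\<forall>e\<in>edges G. src G e \<in> K \<longrightarrow> rng G e \<in> K"
  proof (intro ballI impI)
    fix e assume "e \<in> edges G" "src G e \<in> K"
    then have "reaches G (src G e) (rng G e)"
      unfolding reaches_def by (intro exI[of _ "[e]"]) (auto simp: is_path_def path_src_def path_rng_def)
    then show "rng G e \<in> K" using h \<open>src G e \<in> K\<close> by (auto simp: hereditary_def)
  qed
  then show "K \<subseteq> verts G \<and> (\<forall>e\<in>edges G. src G e \<in> K \<longrightarrow> rng G e \<in> K)"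
    using h by (auto simp: hereditary_def)
next
  assume a: "K \<subseteq> verts G \<and> (\<forall>e\<in>edges G. src G e \<in> K \<longrightarrow> rng G e \<in> K)"
  show "hereditary G K" unfolding hereditary_def
  proof (intro conjI ballI allI impI)
    fix w w' assume "w \<in> K" "reaches G w w'"
    then obtain \<mu> where m: "is_path G \<mu>" "src G (hd \<mu>) = w" "rng G (last \<mu>) = w'"
      by (auto simp: reaches_def path_src_def path_rng_def)
    have all: "\<forall>i<length \<mu>. rng G (\<mu> ! i) \<in> K" using path_closed[OF m(1)] m(2) \<open>w\<in>K\<close> a by blast
    have ne: "\<mu> \<noteq> []" using m(1) by (simp add: is_path_def)
    have lt: "length \<mu> - 1 < length \<mu>" using ne by simp
    have l: "last \<mu> = \<mu> ! (length \<mu> - 1)" using ne by (rule last_conv_nth)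
    have "rng G (\<mu> ! (length \<mu> - 1)) \<in> K" using all lt by blast
    then show "w' \<in> K" using m(3) l by simp
  qed (use a in auto)
qed

lemma return_edge:
  assumes "return_path E \<mu>" "supports E v \<mu>"
  shows "\<exists>e\<in>edges E. src E e = v \<and> (\<forall>H. hereditary E H \<longrightarrow> rng E e \<in> H \<longrightarrow> v \<in> H)"
proof -
  have p: "is_path E \<mu>" and s: "src E (hd \<mu>) = v" and r: "rng E (last \<mu>) = v"
    using assms by (auto simp: return_path_def supports_def path_src_def path_rng_def)
  have ne: "\<mu> \<noteq> []" using p by (auto simp: is_path_def)
  have he: "hd \<mu> \<in> edges E" using p ne by (auto simp: is_path_def)
  show ?thesis
  proof (intro bexI[OF _ he] conjI s allI impI)
    fix H assume h: "hereditary E H" and rH: "rng E (hd \<mu>) \<in> H"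
    show "v \<in> H"
    proof (cases "tl \<mu> = []")
      case True
      then have "last \<mu> = hd \<mu>" using ne by (metis last_ConsL list.collapse)
      then show ?thesis using r rH by simp
    next
      case False
      have "is_path E (tl \<mu>)" using p False
        by (auto simp: is_path_def nth_tl dest: list.set_sel(2))
      moreover have "src E (hd (tl \<mu>)) = rng E (hd \<mu>)"
        using p False ne by (auto simp: is_path_def hd_conv_nth nth_tl length_greater_0_conv[symmetric]
            simp del: length_greater_0_conv)
      moreover have "last (tl \<mu>) = last \<mu>" using False by (simp add: last_tl)
      ultimately have "reaches E (rng E (hd \<mu>)) v"
        unfolding reaches_def path_src_def path_rng_def using r by metis
      then show ?thesis using h rH by (auto simp: hereditary_def)
    qed
  qed
qed


definition phi :: "'v \<Rightarrow> 'v set \<Rightarrow> ('v + new_vert) set" where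
  "phi v H = (if v \<in> H then Inl ` H \<union> {Inr U1, Inr U2} else Inl ` H)"

lemma phi_mem[simp]: "Inl y \<in> phi v H \<longleftrightarrow> y \<in> H" "Inr U1 \<in> phi v H \<longleftrightarrow> v \<in> H"
  "Inr U2 \<in> phi v H \<longleftrightarrow> v \<in> H"
  by (auto simp: phi_def)

lemma map_eq: "splice_ap_map v p = (phi v (fst p), Inl ` snd p)"
  by (simp add: splice_ap_map_def phi_def)

lemma ball_image_eq: "(\<forall>x\<in>f ` A. P x) \<longleftrightarrow> (\<forall>y\<in>A. P (f y))" by auto

lemma ball_UNIV_eq: "(\<forall>x\<in>UNIV. P x) \<longleftrightarrow> (\<forall>y. P y)" by auto

lemma ball_range_eq: "(\<forall>x\<in>range f. P x) \<longleftrightarrow> (\<forall>y. P (f y))" by auto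

lemma closedC:
  "(\<forall>e\<in>edges (cuntz_splice E v). src (cuntz_splice E v) e \<in> K \<longrightarrow> rng (cuntz_splice E v) e \<in> K)
   \<longleftrightarrow> (\<forall>e\<in>edges E. Inl (src E e) \<in> K \<longrightarrow> Inl (rng E e) \<in> K) \<and> (Inl v \<in> K \<longrightarrow> Inr U1 \<in> K)
      \<and> (Inr U1 \<in> K \<longrightarrow> Inl v \<in> K) \<and> (Inr U1 \<in> K \<longrightarrow> Inr U2 \<in> K) \<and> (Inr U2 \<in> K \<longrightarrow> Inr U1 \<in> K)"
  unfolding cs_edges ball_Un ball_range_eq ball_image_eq ball_UNIV_eq all_new_edge cs_src cs_rng by simp

lemma vertsC_cases:
  assumes "w \<in> verts (cuntz_splice E v)"
  obtains x where "w = Inl x" "x \<in> verts E" | "w = Inr U1" | "w = Inr U2"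
  using assms by auto

lemma hered_phi:
  assumes "hereditary E H" "v \<in> verts E"
  shows "hereditary (cuntz_splice E v) (phi v H)"
proof -
  have a: "H \<subseteq> verts E" and b: "\<forall>e\<in>edges E. src E e \<in> H \<longrightarrow> rng E e \<in> H"
    using assms(1) by (auto simp: hered_iff)
  have c: "phi v H \<subseteq> verts (cuntz_splice E v)"
    using a assms(2) unfolding phi_def cs_verts by (cases "v \<in> H") auto
  show ?thesis unfolding hered_iff[of "cuntz_splice E v"] closedC phi_mem
    by (intro conjI impI) (rule c | rule b | assumption)+
qed

lemma finite_Inl_iff: "finite (Inl ` A) \<longleftrightarrow> finite A"
  by (rule finite_image_iff[OF inj_Inl])

lemma regular_Inl:
  assumes "x \<noteq> v"
  shows "regular (cuntz_splice E v) (Inl x) \<longleftrightarrow> regular E x"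
proof -
  have e0: "(if x = v then {Inr F1} else {}) = ({} :: ('e + new_edge) set)" using assms by simp
  have "emitted (cuntz_splice E v) (Inl x) = Inl ` emitted E x"
    using emitted_Inl[of E v x] unfolding e0 Un_empty_right by assumption
  then show ?thesis by (simp only: regular_def image_is_empty finite_Inl_iff)
qed

lemma sat_phi:
  assumes "hereditary E H" "saturated E H" "v \<in> verts E"
  shows "saturated (cuntz_splice E v) (phi v H)"
  unfolding saturated_def
proof (intro conjI ballI impI)
  show "phi v H \<subseteq> verts (cuntz_splice E v)"
    using assms by (auto simp: phi_def saturated_def)
next
  fix w assume w: "w \<in> verts (cuntz_splice E v)"
    and c: "regular (cuntz_splice E v) w \<and> (\<forall>e\<in>emitted (cuntz_splice E v) w. rng (cuntz_splice E v) e \<in> phi v H)"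
  from w show "w \<in> phi v H"
  proof (cases rule: vertsC_cases)
    case (1 x)
    show ?thesis
    proof (cases "x = v")
      case True
      then have "Inr F1 \<in> emitted (cuntz_splice E v) w" using 1 by (simp add: emitted_Inl)
      then have "v \<in> H" using c by fastforce
      then show ?thesis using 1 True by simp
    next
      case False
      then have "regular E x" using c 1 regular_Inl by metis
      moreover have "\<forall>e\<in>emitted E x. rng E e \<in> H" using c 1 False by (auto simp: emitted_Inl)
      ultimately have "x \<in> H" using assms(2) 1 by (auto simp: saturated_def)
      then show ?thesis using 1 by simp
    qed
  next
    case 2 then show ?thesis using c by (auto simp: emitted_U1)
  next
    case 3 then show ?thesis using c by (auto simp: emitted_U2)
  qed
qed

lemma outset_Inl:
  "{e \<in> emitted (cuntz_splice E v) (Inl x). rng (cuntz_splice E v) e \<notin> phi v H}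
   = Inl ` {e \<in> emitted E x. rng E e \<notin> H} \<union> (if x = v \<and> v \<notin> H then {Inr F1} else {})"
  by (auto simp: emitted_Inl)

lemma hinf_phi:
  assumes "hereditary E H"
    and re: "\<exists>e\<in>edges E. src E e = v \<and> (\<forall>H. hereditary E H \<longrightarrow> rng E e \<in> H \<longrightarrow> v \<in> H)"
  shows "H_inf_fin (cuntz_splice E v) (phi v H) = Inl ` H_inf_fin E H"
proof (rule set_eqI)
  fix w
  show "w \<in> H_inf_fin (cuntz_splice E v) (phi v H) \<longleftrightarrow> w \<in> Inl ` H_inf_fin E H"
  proof (cases w)
    case (Inl x)
    have fF: "finite (if x = v then {Inr F1} else ({} :: ('e + new_edge) set))" by simp
    have fF2: "finite (if x = v \<and> v \<notin> H then {Inr F1} else ({} :: ('e + new_edge) set))" by simp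
    have inf: "infinite_emitter (cuntz_splice E v) (Inl x) \<longleftrightarrow> infinite_emitter E x"
      unfolding infinite_emitter_def emitted_Inl finite_Un finite_Inl_iff using fF by blast
    have fin: "finite {e \<in> emitted (cuntz_splice E v) (Inl x). rng (cuntz_splice E v) e \<notin> phi v H}
       \<longleftrightarrow> finite {e \<in> emitted E x. rng E e \<notin> H}"
      unfolding outset_Inl finite_Un finite_Inl_iff using fF2 by blast
    have ne: "x \<notin> H \<Longrightarrow> ({e \<in> emitted (cuntz_splice E v) (Inl x). rng (cuntz_splice E v) e \<notin> phi v H} \<noteq> {}
       \<longleftrightarrow> {e \<in> emitted E x. rng E e \<notin> H} \<noteq> {})"
    proof -
      assume xH: "x \<notin> H"
      show ?thesis
      proof (cases "x = v")
        case True
        from re obtain e where e: "e \<in> edges E" "src E e = v" "rng E e \<in> H \<longrightarrow> v \<in> H"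
          using assms(1) by blast
        then have "e \<in> {e \<in> emitted E x. rng E e \<notin> H}" using True xH by (simp add: emitted_def)
        then show ?thesis unfolding outset_Inl by blast
      next
        case False
        then show ?thesis unfolding outset_Inl by simp
      qed
    qed
    have l: "Inl x \<in> H_inf_fin (cuntz_splice E v) (phi v H) \<longleftrightarrow>
      (x \<in> verts E \<and> x \<notin> H) \<and> infinite_emitter (cuntz_splice E v) (Inl x) \<and>
      finite {e \<in> emitted (cuntz_splice E v) (Inl x). rng (cuntz_splice E v) e \<notin> phi v H} \<and>
      {e \<in> emitted (cuntz_splice E v) (Inl x). rng (cuntz_splice E v) e \<notin> phi v H} \<noteq> {}"
      unfolding H_inf_fin_def by (simp add: inj_image_mem_iff)
    have r: "Inl x \<in> Inl ` H_inf_fin E H \<longleftrightarrow>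
      (x \<in> verts E \<and> x \<notin> H) \<and> infinite_emitter E x \<and>
      finite {e \<in> emitted E x. rng E e \<notin> H} \<and> {e \<in> emitted E x. rng E e \<notin> H} \<noteq> {}"
      unfolding H_inf_fin_def by (simp add: inj_image_mem_iff)
    show ?thesis unfolding Inl l r using inf fin ne by blast
  next
    case (Inr u)
    have "\<not> infinite_emitter (cuntz_splice E v) (Inr u)"
      by (cases u) (simp_all add: infinite_emitter_def emitted_U1 emitted_U2)
    then show ?thesis unfolding Inr H_inf_fin_def by blast
  qed
qed

lemma surj_part:
  fixes E :: "('v, 'e) graph"
  assumes "(H', B') \<in> admissible_pairs (cuntz_splice E v)" "v \<in> verts E"
    and re: "\<exists>e\<in>edges E. src E e = v \<and> (\<forall>H. hereditary E H \<longrightarrow> rng E e \<in> H \<longrightarrow> v \<in> H)"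
  shows "\<exists>p\<in>admissible_pairs E. splice_ap_map v p = (H', B')"
proof -
  let ?C = "cuntz_splice E v"
  define H where "H = Inl -` H'"
  have adm: "hereditary ?C H' \<and> saturated ?C H' \<and> B' \<subseteq> H_inf_fin ?C H'"
    using assms(1) unfolding admissible_pairs_def by simp
  then have hC: "hereditary ?C H'" and sC: "saturated ?C H'" and bC: "B' \<subseteq> H_inf_fin ?C H'"
    by blast+
  have sub: "H' \<subseteq> verts ?C" and cl: "\<forall>e\<in>edges ?C. src ?C e \<in> H' \<longrightarrow> rng ?C e \<in> H'"
    using hC unfolding hered_iff by blast+
  have cl2: "(\<forall>e\<in>edges E. Inl (src E e) \<in> H' \<longrightarrow> Inl (rng E e) \<in> H') \<and> (Inl v \<in> H' \<longrightarrow> Inr U1 \<in> H')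
      \<and> (Inr U1 \<in> H' \<longrightarrow> Inl v \<in> H') \<and> (Inr U1 \<in> H' \<longrightarrow> Inr U2 \<in> H') \<and> (Inr U2 \<in> H' \<longrightarrow> Inr U1 \<in> H')"
    using cl unfolding closedC .
  have Hsub: "H \<subseteq> verts E"
  proof
    fix x assume "x \<in> H"
    then have "Inl x \<in> H'" by (simp add: H_def)
    then have "Inl x \<in> verts ?C" using sub by blast
    then show "x \<in> verts E" by auto
  qed
  have c1: "\<forall>e\<in>edges E. Inl (src E e) \<in> H' \<longrightarrow> Inl (rng E e) \<in> H'" using cl2 by (rule conjunct1)
  have clE: "\<forall>e\<in>edges E. src E e \<in> H \<longrightarrow> rng E e \<in> H" using c1 by (simp add: H_def)
  have hE: "hereditary E H" unfolding hered_iff using Hsub clE by blast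
  have phiH: "phi v H = H'"
  proof (rule set_eqI)
    fix w show "w \<in> phi v H \<longleftrightarrow> w \<in> H'"
    proof (cases w)
      case (Inl x) then show ?thesis by (simp add: H_def)
    next
      case (Inr u)
      have vH: "v \<in> H \<longleftrightarrow> Inl v \<in> H'" by (simp add: H_def)
      show ?thesis
      proof (cases u)
        case U1 then show ?thesis unfolding Inr U1 phi_mem using cl2 vH by blast
      next
        case U2 then show ?thesis unfolding Inr U2 phi_mem using cl2 vH by blast
      qed
    qed
  qed
  have sE: "saturated E H" unfolding saturated_def
  proof (intro conjI ballI impI)
    show "H \<subseteq> verts E" by (rule Hsub)
  next
    fix x assume x: "x \<in> verts E" and c: "regular E x \<and> (\<forall>e\<in>emitted E x. rng E e \<in> H)"
    show "x \<in> H"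
    proof (cases "x = v")
      case True
      from re obtain e where e: "e \<in> edges E" "src E e = v" "rng E e \<in> H \<longrightarrow> v \<in> H"
        using hE by blast
      then have "e \<in> emitted E x" using True by (simp add: emitted_def)
      then show ?thesis using c True e(3) by blast
    next
      case False
      then have "regular ?C (Inl x)" using c regular_Inl by metis
      moreover have "\<forall>e\<in>emitted ?C (Inl x). rng ?C e \<in> H'"
        using c False by (simp add: emitted_Inl H_def)
      moreover have "Inl x \<in> verts ?C" using x by simp
      ultimately have "Inl x \<in> H'" using sC unfolding saturated_def by blast
      then show ?thesis by (simp add: H_def)
    qed
  qed
  have hi: "H_inf_fin ?C H' = Inl ` H_inf_fin E H"
    using hinf_phi[OF hE re] unfolding phiH .
  define B where "B = Inl -` B'"
  have BB: "B' = Inl ` B"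
  proof (rule set_eqI)
    fix w show "w \<in> B' \<longleftrightarrow> w \<in> Inl ` B"
    proof
      assume "w \<in> B'"
      then have "w \<in> Inl ` H_inf_fin E H" using bC hi by blast
      then obtain x where "w = Inl x" by blast
      then show "w \<in> Inl ` B" using \<open>w \<in> B'\<close> by (simp add: B_def)
    next
      assume "w \<in> Inl ` B" then show "w \<in> B'" unfolding B_def by blast
    qed
  qed
  have "(Inl ` B :: ('v + new_vert) set) \<subseteq> Inl ` H_inf_fin E H" using bC unfolding hi BB .
  then have "B \<subseteq> H_inf_fin E H" by (simp add: inj_image_subset_iff)
  then have "(H, B) \<in> admissible_pairs E" unfolding admissible_pairs_def using hE sE
    by (intro CollectI case_prodI conjI)
  moreover have "splice_ap_map v (H, B) = (H', B')"
  proof -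
    have "splice_ap_map v (H, B) = (phi v H, Inl ` B)" by (simp only: map_eq fst_conv snd_conv)
    also have "\<dots> = (H', B')" unfolding phiH BB ..
    finally show ?thesis .
  qed
  ultimately show ?thesis by blast
qed

theorem proposition2p9:
  fixes E :: "('v, 'e) graph" and v :: 'v
  assumes "wf_graph E"
    and "condition_K E"
    and "v \<in> verts E"
    and "\<exists>\<mu>1 \<mu>2. \<mu>1 \<noteq> \<mu>2 \<and> return_path E \<mu>1 \<and> supports E v \<mu>1
                 \<and> return_path E \<mu>2 \<and> supports E v \<mu>2"
  shows "(\<forall>p \<in> admissible_pairs E. splice_ap_map v p \<in> admissible_pairs (cuntz_splice E v))
    \<and> bij_betw (splice_ap_map v) (admissible_pairs E) (admissible_pairs (cuntz_splice E v))
    \<and> (\<forall>p \<in> admissible_pairs E. \<forall>q \<in> admissible_pairs E.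
          ap_le p q \<longleftrightarrow> ap_le (splice_ap_map v p) (splice_ap_map v q))"
proof -
  let ?C = "cuntz_splice E v"
  have re: "\<exists>e\<in>edges E. src E e = v \<and> (\<forall>H. hereditary E H \<longrightarrow> rng E e \<in> H \<longrightarrow> v \<in> H)"
  proof -
    obtain \<mu>1 where m1: "return_path E \<mu>1" "supports E v \<mu>1" using assms(4) by blast
    show ?thesis by (rule return_edge[OF m1])
  qed
  have wd: "\<forall>p \<in> admissible_pairs E. splice_ap_map v p \<in> admissible_pairs ?C"
  proof
    fix p assume pA: "p \<in> admissible_pairs E"
    obtain H B where p: "p = (H, B)" by (cases p)
    have hsb: "hereditary E H \<and> saturated E H \<and> B \<subseteq> H_inf_fin E H"
      using pA unfolding p admissible_pairs_def by simp
    then have h: "hereditary E H" and sH: "saturated E H" and bH: "B \<subseteq> H_inf_fin E H" by blast+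
    have "(Inl ` B :: ('v + new_vert) set) \<subseteq> H_inf_fin ?C (phi v H)"
      unfolding hinf_phi[OF h re] using bH by (rule image_mono)
    then have "(phi v H, Inl ` B) \<in> admissible_pairs ?C"
      using hered_phi[OF h assms(3)] sat_phi[OF h sH assms(3)]
      unfolding admissible_pairs_def by (intro CollectI case_prodI conjI)
    moreover have "splice_ap_map v p = (phi v H, Inl ` B)" unfolding p by (simp only: map_eq fst_conv snd_conv)
    ultimately show "splice_ap_map v p \<in> admissible_pairs ?C" by (simp only:)
  qed
  have inj: "inj_on (splice_ap_map v) (admissible_pairs E)"
  proof (rule inj_onI)
    fix p q assume "splice_ap_map v p = splice_ap_map v q"
    then have a: "phi v (fst p) = phi v (fst q)" and b: "Inl ` snd p = (Inl ` snd q :: ('v + new_vert) set)"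
      unfolding map_eq by simp_all
    have "fst p = fst q"
    proof (rule set_eqI)
      fix x have "x \<in> fst p \<longleftrightarrow> Inl x \<in> phi v (fst p)" by simp
      also have "\<dots> \<longleftrightarrow> Inl x \<in> phi v (fst q)" unfolding a ..
      also have "\<dots> \<longleftrightarrow> x \<in> fst q" by simp
      finally show "x \<in> fst p \<longleftrightarrow> x \<in> fst q" .
    qed
    moreover from b have "snd p = snd q" by (simp add: inj_image_eq_iff)
    ultimately show "p = q" by (simp add: prod_eq_iff)
  qed
  have img: "splice_ap_map v ` admissible_pairs E = admissible_pairs ?C"
  proof
    show "splice_ap_map v ` admissible_pairs E \<subseteq> admissible_pairs ?C" using wd by blast
  next
    show "admissible_pairs ?C \<subseteq> splice_ap_map v ` admissible_pairs E"
    proof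
      fix q assume qA: "q \<in> admissible_pairs ?C"
      obtain H' B' where q: "q = (H', B')" by (cases q)
      obtain p where pA1: "p \<in> admissible_pairs E" and pe: "splice_ap_map v p = (H', B')"
        using surj_part[OF qA[unfolded q] assms(3) re] by blast
      show "q \<in> splice_ap_map v ` admissible_pairs E" unfolding q using image_eqI[of "(H', B')" "splice_ap_map v" p "admissible_pairs E", OF pe[symmetric] pA1] .
    qed
  qed
  have ord: "\<forall>p \<in> admissible_pairs E. \<forall>q \<in> admissible_pairs E.
          ap_le p q \<longleftrightarrow> ap_le (splice_ap_map v p) (splice_ap_map v q)"
  proof (intro ballI)
    fix p q :: "'v set \<times> 'v set"
    have 1: "phi v (fst p) \<subseteq> phi v (fst q) \<longleftrightarrow> fst p \<subseteq> fst q"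
    proof
      assume s: "phi v (fst p) \<subseteq> phi v (fst q)"
      show "fst p \<subseteq> fst q"
      proof
        fix x assume "x \<in> fst p"
        then have "Inl x \<in> phi v (fst p)" by simp
        then have "Inl x \<in> phi v (fst q)" using s by blast
        then show "x \<in> fst q" by simp
      qed
    next
      assume "fst p \<subseteq> fst q"
      then show "phi v (fst p) \<subseteq> phi v (fst q)" unfolding phi_def by (cases "v \<in> fst p") auto
    qed
    have 2: "(Inl ` snd p :: ('v + new_vert) set) \<subseteq> phi v (fst q) \<union> Inl ` snd q \<longleftrightarrow> snd p \<subseteq> fst q \<union> snd q"
      by (simp add: image_subset_iff inj_image_mem_iff subset_eq)
    show "ap_le p q \<longleftrightarrow> ap_le (splice_ap_map v p) (splice_ap_map v q)"
      unfolding ap_le_def map_eq fst_conv snd_conv 1 2 ..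
  qed
  show ?thesis using wd inj img ord unfolding bij_betw_def by blast
qed

end
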